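(* Let $f:X\to Y$ be continuous and let $\Phi:Y\times[0,1]\to Z$ be a proper homotopy (a homotopy that is proper as a map). Then $L(\Phi\circ(f\times\mathrm{id}_{[0,1]}))=\Phi(L(f)\times[0,1])$.
   Context: All topological spaces are Hausdorff, second countable and locally compact. A continuous map is proper if preimages of compact sets are compact. The limit set $L(f)$ of a continuous map $f:X\to Y$ is the set of all $y\in Y$ for which there is a sequence $(x_n)$ in $X$ with no limit points in $X$ such that $f(x_n)\to y$. *)

theory Defs
  imports "HOL-Analysis.Analysis"
begin

definition good_space :: "'a topology \<Rightarrow> bool" where
  "good_space X \<longleftrightarrow> Hausdorff_space X \<and> second_countable X \<and> locally_compact_space X"

definition cproper_map :: "'a topology \<Rightarrow> 'b topology \<Rightarrow> ('a \<Rightarrow> 'b) \<Rightarrow> bool" where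
  "cproper_map X Y f \<longleftrightarrow> continuous_map X Y f \<and>
     (\<forall>K. compactin Y K \<longrightarrow> compactin X {x \<in> topspace X. f x \<in> K})"

definition unit_interval :: "real topology" where
  "unit_interval = subtopology euclideanreal {0..1}"

definition seq_limit_point :: "'a topology \<Rightarrow> (nat \<Rightarrow> 'a) \<Rightarrow> 'a \<Rightarrow> bool" where
  "seq_limit_point X s p \<longleftrightarrow> p \<in> topspace X \<and>
     (\<forall>U. openin X U \<and> p \<in> U \<longrightarrow> (\<exists>\<^sub>F n in sequentially. s n \<in> U))"

definition limit_set :: "'a topology \<Rightarrow> 'b topology \<Rightarrow> ('a \<Rightarrow> 'b) \<Rightarrow> 'b set" where
  "limit_set X Y f = {y \<in> topspace Y. \<exists>s. (\<forall>n. s n \<in> topspace X) \<and>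
      (\<forall>p. \<not> seq_limit_point X s p) \<and> limitin Y (f \<circ> s) y sequentially}"

end

theory Submission
  imports Defs
begin

lemma cluster_in_compact:
  assumes "compactin X K" "eventually (\<lambda>n. \<sigma> n \<in> K) sequentially"
  shows "\<exists>l\<in>K. \<forall>U. openin X U \<and> l \<in> U \<longrightarrow> frequently (\<lambda>n. \<sigma> n \<in> U) sequentially"
proof (rule ccontr)
  assume "\<not> ?thesis"
  then have "\<forall>l\<in>K. \<exists>U. openin X U \<and> l \<in> U \<and> eventually (\<lambda>n. \<sigma> n \<notin> U) sequentially"
    by (auto simp: not_frequently)
  then obtain U where U: "\<And>l. l \<in> K \<Longrightarrow> openin X (U l) \<and> l \<in> U l \<and> eventually (\<lambda>n. \<sigma> n \<notin> U l) sequentially"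
    by metis
  have "(\<forall>B\<in>U ` K. openin X B) \<and> K \<subseteq> \<Union> (U ` K)" using U by blast
  then obtain F where F: "finite F" "F \<subseteq> U ` K" "K \<subseteq> \<Union>F"
    using assms(1) unfolding compactin_def by meson
  then obtain G where G: "finite G" "G \<subseteq> K" "F = U ` G" by (meson finite_subset_image)
  have "eventually (\<lambda>n. \<forall>l\<in>G. \<sigma> n \<notin> U l) sequentially"
    using G U by (intro eventually_ball_finite) auto
  with assms(2) have "eventually (\<lambda>n. False) sequentially"
    by eventually_elim (use F G in blast)
  then show False by simp
qed

lemma first_countable_subseq:
  assumes "first_countable X" "l \<in> topspace X"
    and cl: "\<forall>U. openin X U \<and> l \<in> U \<longrightarrow> frequently (\<lambda>n. \<sigma> n \<in> U) sequentially"
  shows "\<exists>r. strict_mono r \<and> limitin X (\<sigma> \<circ> r) l sequentially"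
proof -
  obtain B where B: "countable B" "\<forall>V\<in>B. openin X V"
    "\<forall>U. openin X U \<and> l \<in> U \<longrightarrow> (\<exists>V\<in>B. l \<in> V \<and> V \<subseteq> U)"
    using assms(1,2) unfolding first_countable_def by metis
  define B' where "B' = {V\<in>B. l \<in> V}"
  have "B' \<noteq> {}" using B(3) assms(2) unfolding B'_def by fastforce
  moreover have "countable B'" using B(1) unfolding B'_def by simp
  ultimately have rb: "range (from_nat_into B') = B'" by (simp add: range_from_nat_into)
  define b where "b = from_nat_into B'"
  have bo: "openin X (b i) \<and> l \<in> b i" for i
    using rb B(2) unfolding b_def B'_def by blast
  define W where "W = rec_nat (b 0) (\<lambda>k w. w \<inter> b (Suc k))"
  have W0: "W 0 = b 0" and WS: "W (Suc k) = W k \<inter> b (Suc k)" for k by (simp_all add: W_def)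
  have Wo: "openin X (W k) \<and> l \<in> W k" for k
    by (induction k) (use bo in \<open>auto simp: W0 WS\<close>)
  have Wb: "W k \<subseteq> b k" for k by (cases k) (auto simp: W0 WS)
  have Wm: "i \<le> k \<Longrightarrow> W k \<subseteq> W i" for i k
    by (induction k rule: dec_induct) (auto simp: WS)
  have ex: "\<exists>n>m. \<sigma> n \<in> W k" for k m
  proof -
    have "frequently (\<lambda>n. \<sigma> n \<in> W k) sequentially" using cl Wo by blast
    then obtain n where "n \<ge> Suc m" "\<sigma> n \<in> W k" unfolding frequently_sequentially by blast
    then show ?thesis using Suc_le_eq by blast
  qed
  define g where "g k m = (SOME n. n > m \<and> \<sigma> n \<in> W k)" for k m
  have g: "g k m > m \<and> \<sigma> (g k m) \<in> W k" for k m
    unfolding g_def by (rule someI_ex) (rule ex)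
  define r where "r = rec_nat (g 0 0) (\<lambda>k m. g (Suc k) m)"
  have r0: "r 0 = g 0 0" and rS: "r (Suc k) = g (Suc k) (r k)" for k by (simp_all add: r_def)
  have "strict_mono r" unfolding strict_mono_Suc_iff using g rS by simp
  moreover have rW: "\<sigma> (r k) \<in> W k" for k by (cases k) (use g r0 rS in auto)
  moreover have "limitin X (\<sigma> \<circ> r) l sequentially"
    unfolding limitin_def
  proof (intro conjI allI impI)
    show "l \<in> topspace X" by fact
    fix U assume "openin X U \<and> l \<in> U"
    then obtain V where "V \<in> B" "l \<in> V" "V \<subseteq> U" using B(3) by blast
    then have "V \<in> B'" unfolding B'_def by simp
    then obtain i where Vi: "V = b i" using rb unfolding b_def by blast
    show "\<forall>\<^sub>F x in sequentially. (\<sigma> \<circ> r) x \<in> U"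
      unfolding eventually_sequentially
      using rW Wm Wb Vi \<open>V \<subseteq> U\<close> by (metis comp_apply subsetD)
  qed
  ultimately show ?thesis by blast
qed

theorem corollary5:
  fixes X :: "'a topology" and Y :: "'b topology" and Z :: "'c topology"
    and f :: "'a \<Rightarrow> 'b" and \<Phi> :: "'b \<times> real \<Rightarrow> 'c"
  assumes "good_space X" and "good_space Y" and "good_space Z"
    and "continuous_map X Y f"
    and "cproper_map (prod_topology Y unit_interval) Z \<Phi>"
  shows "limit_set (prod_topology X unit_interval) Z (\<Phi> \<circ> (\<lambda>(x, t). (f x, t)))
         = \<Phi> ` (limit_set X Y f \<times> {0..1})"
proof
  have tI: "topspace unit_interval = {0..1}" by (simp add: unit_interval_def)
  have cP: "continuous_map (prod_topology Y unit_interval) Z \<Phi>"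
    using assms(5) by (simp add: cproper_map_def)
  show "\<Phi> ` (limit_set X Y f \<times> {0..1}) \<subseteq> limit_set (prod_topology X unit_interval) Z (\<Phi> \<circ> (\<lambda>(x, t). (f x, t)))"
  proof clarify
    fix y and t :: real
    assume y: "y \<in> limit_set X Y f" and t: "t \<in> {0..1}"
    then obtain s where s: "\<forall>n. s n \<in> topspace X" "\<forall>p. \<not> seq_limit_point X s p"
      "limitin Y (f \<circ> s) y sequentially" and yY: "y \<in> topspace Y"
      unfolding limit_set_def by blast
    define s' where "s' n = (s n, t)" for n
    have s'top: "\<forall>n. s' n \<in> topspace (prod_topology X unit_interval)"
      using s(1) t tI by (simp add: s'_def)
    have nocl: "\<not> seq_limit_point (prod_topology X unit_interval) s' q" for q
    proof
      assume q: "seq_limit_point (prod_topology X unit_interval) s' q"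
      have "seq_limit_point X s (fst q)"
        unfolding seq_limit_point_def
      proof (intro conjI allI impI)
        show "fst q \<in> topspace X" using q by (auto simp: seq_limit_point_def)
        fix U assume U: "openin X U \<and> fst q \<in> U"
        have "openin (prod_topology X unit_interval) (U \<times> topspace unit_interval)"
          using U by (simp add: openin_prod_Times_iff)
        moreover have "q \<in> U \<times> topspace unit_interval"
          using q U by (cases q) (auto simp: seq_limit_point_def)
        ultimately have "frequently (\<lambda>n. s' n \<in> U \<times> topspace unit_interval) sequentially"
          using q unfolding seq_limit_point_def by blast
        then show "frequently (\<lambda>n. s n \<in> U) sequentially"
          by (rule frequently_elim1) (simp add: s'_def)
      qed
      then show False using s(2) by blast
    qed
    have "limitin (prod_topology Y unit_interval) (\<lambda>n. (f (s n), t)) (y, t) sequentially"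
      using s(3) t tI by (simp add: limitin_pairwise o_def)
    then have "limitin Z (\<Phi> \<circ> (\<lambda>n. (f (s n), t))) (\<Phi> (y, t)) sequentially"
      by (rule continuous_map_limit[OF cP])
    moreover have "(\<Phi> \<circ> (\<lambda>(x, t). (f x, t))) \<circ> s' = \<Phi> \<circ> (\<lambda>n. (f (s n), t))"
      by (auto simp: s'_def)
    ultimately have "limitin Z ((\<Phi> \<circ> (\<lambda>(x, t). (f x, t))) \<circ> s') (\<Phi> (y, t)) sequentially"
      by simp
    moreover have "\<Phi> (y, t) \<in> topspace Z"
      using calculation limitin_topspace by metis
    ultimately show "\<Phi> (y, t) \<in> limit_set (prod_topology X unit_interval) Z (\<Phi> \<circ> (\<lambda>(x, t). (f x, t)))"
      unfolding limit_set_def using s'top nocl by blast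
  qed
next
  have tI: "topspace unit_interval = {0..1}" by (simp add: unit_interval_def)
  have cP: "continuous_map (prod_topology Y unit_interval) Z \<Phi>"
    using assms(5) by (simp add: cproper_map_def)
  show "limit_set (prod_topology X unit_interval) Z (\<Phi> \<circ> (\<lambda>(x, t). (f x, t))) \<subseteq> \<Phi> ` (limit_set X Y f \<times> {0..1})"
  proof
    fix z assume z: "z \<in> limit_set (prod_topology X unit_interval) Z (\<Phi> \<circ> (\<lambda>(x, t). (f x, t)))"
    then obtain s where s: "\<forall>n. s n \<in> topspace (prod_topology X unit_interval)"
      "\<forall>p. \<not> seq_limit_point (prod_topology X unit_interval) s p"
      "limitin Z ((\<Phi> \<circ> (\<lambda>(x, t). (f x, t))) \<circ> s) z sequentially" and zZ: "z \<in> topspace Z"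
      unfolding limit_set_def by blast
    define x where "x n = fst (s n)" for n
    define \<tau> where "\<tau> n = snd (s n)" for n
    have sx: "s n = (x n, \<tau> n)" for n by (simp add: x_def \<tau>_def)
    have xX: "x n \<in> topspace X" and \<tau>I: "\<tau> n \<in> {0..1}" for n
      using s(1) tI by (auto simp: sx)
    have fxY: "f (x n) \<in> topspace Y" for n
      using continuous_map_image_subset_topspace[OF assms(4)] xX by blast
    have lim0: "limitin Z (\<lambda>n. \<Phi> (f (x n), \<tau> n)) z sequentially"
      using s(3) by (simp add: o_def sx)
    have sc: "seq_compact {0..1::real}" by (simp add: compact_imp_seq_compact)
    obtain t r1 where t: "t \<in> {0..1}" and r1: "strict_mono r1" and tlim: "(\<tau> \<circ> r1) \<longlonglongrightarrow> t"
      using seq_compactE[OF sc, of \<tau>] \<tau>I by blast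
    obtain U K where UK: "openin Z U" "compactin Z K" "z \<in> U" "U \<subseteq> K"
      using assms(3) zZ unfolding good_space_def locally_compact_space_def by blast
    define C where "C = {p \<in> topspace (prod_topology Y unit_interval). \<Phi> p \<in> K}"
    have cC: "compactin (prod_topology Y unit_interval) C"
      using assms(5) UK(2) unfolding cproper_map_def C_def by blast
    have cfC: "compactin Y (fst ` C)"
      by (rule image_compactin[OF cC continuous_map_fst])
    have "eventually (\<lambda>n. \<Phi> (f (x n), \<tau> n) \<in> U) sequentially"
      using lim0 UK unfolding limitin_def by blast
    then have "eventually (\<lambda>n. f (x n) \<in> fst ` C) sequentially"
    proof (rule eventually_mono)
      fix n assume "\<Phi> (f (x n), \<tau> n) \<in> U"
      then have "(f (x n), \<tau> n) \<in> C" using UK(4) fxY \<tau>I tI by (auto simp: C_def)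
      then show "f (x n) \<in> fst ` C" by force
    qed
    then have "eventually (\<lambda>n. f (x (r1 n)) \<in> fst ` C) sequentially"
      using eventually_subseq[OF r1] by blast
    then obtain y where y: "y \<in> fst ` C"
      and ycl: "\<forall>U. openin Y U \<and> y \<in> U \<longrightarrow> frequently (\<lambda>n. f (x (r1 n)) \<in> U) sequentially"
      using cluster_in_compact[OF cfC, of "\<lambda>n. f (x (r1 n))"] by blast
    have yY: "y \<in> topspace Y" using y cfC compactin_subset_topspace by blast
    have fcY: "first_countable Y"
      using assms(2) by (simp add: good_space_def second_countable_imp_first_countable)
    obtain r2 where r2: "strict_mono r2" and ylim: "limitin Y ((\<lambda>n. f (x (r1 n))) \<circ> r2) y sequentially"
      using first_countable_subseq[OF fcY yY ycl] by blast
    define r where "r = r1 \<circ> r2"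
    have r: "strict_mono r" unfolding r_def using r1 r2 by (rule strict_mono_o)
    have tlim2: "(\<lambda>n. \<tau> (r n)) \<longlonglongrightarrow> t"
      using LIMSEQ_subseq_LIMSEQ[OF tlim r2] by (simp add: r_def o_def)
    have tlimI: "limitin unit_interval (\<lambda>n. \<tau> (r n)) t sequentially"
      unfolding unit_interval_def limitin_subtopology limitin_canonical_iff
      using tlim2 t \<tau>I by simp
    have ylim2: "limitin Y (\<lambda>n. f (x (r n))) y sequentially"
      using ylim by (simp add: r_def o_def)
    have "limitin (prod_topology Y unit_interval) (\<lambda>n. (f (x (r n)), \<tau> (r n))) (y, t) sequentially"
      using ylim2 tlimI by (simp add: limitin_pairwise o_def)
    then have L1: "limitin Z (\<Phi> \<circ> (\<lambda>n. (f (x (r n)), \<tau> (r n)))) (\<Phi> (y, t)) sequentially"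
      by (rule continuous_map_limit[OF cP])
    have L2: "limitin Z (\<Phi> \<circ> (\<lambda>n. (f (x (r n)), \<tau> (r n)))) z sequentially"
      using limitin_subsequence[OF r lim0] by (simp add: o_def)
    have HZ: "Hausdorff_space Z" using assms(3) by (simp add: good_space_def)
    have zeq: "z = \<Phi> (y, t)"
      using limitin_Hausdorff_unique[OF L2 L1 _ HZ] by simp
    have nocl: "\<not> seq_limit_point X (x \<circ> r) p" for p
    proof
      assume p: "seq_limit_point X (x \<circ> r) p"
      have "seq_limit_point (prod_topology X unit_interval) s (p, t)"
        unfolding seq_limit_point_def
      proof (intro conjI allI impI)
        show "(p, t) \<in> topspace (prod_topology X unit_interval)"
          using p t tI by (simp add: seq_limit_point_def)
        fix W assume W: "openin (prod_topology X unit_interval) W \<and> (p, t) \<in> W"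
        then obtain U V where UV: "openin X U" "openin unit_interval V" "p \<in> U" "t \<in> V" "U \<times> V \<subseteq> W"
          unfolding openin_prod_topology_alt by blast
        have "frequently (\<lambda>n. x (r n) \<in> U) sequentially"
          using p UV unfolding seq_limit_point_def by simp
        moreover have "eventually (\<lambda>n. \<tau> (r n) \<in> V) sequentially"
          using tlimI UV unfolding limitin_def by blast
        ultimately have "frequently (\<lambda>n. \<tau> (r n) \<in> V \<and> x (r n) \<in> U) sequentially"
          by (rule frequently_eventually_conj)
        then have fr: "frequently (\<lambda>n. s (r n) \<in> W) sequentially"
          by (rule frequently_elim1) (use UV(5) in \<open>auto simp: sx\<close>)
        show "frequently (\<lambda>n. s n \<in> W) sequentially"
          unfolding frequently_sequentially
        proof
          fix N
          obtain n where "n \<ge> N" "s (r n) \<in> W" using fr unfolding frequently_sequentially by blast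
          moreover have "r n \<ge> n" using seq_suble[OF r] .
          ultimately show "\<exists>m\<ge>N. s m \<in> W" by (intro exI[of _ "r n"]) simp
        qed
      qed
      then show False using s(2) by blast
    qed
    have "(\<forall>n. (x \<circ> r) n \<in> topspace X) \<and> (\<forall>p. \<not> seq_limit_point X (x \<circ> r) p)
        \<and> limitin Y (f \<circ> (x \<circ> r)) y sequentially"
      using xX nocl ylim2 by (simp add: o_def)
    then have "y \<in> limit_set X Y f"
      unfolding limit_set_def using yY by blast
    then show "z \<in> \<Phi> ` (limit_set X Y f \<times> {0..1})"
      using zeq t by blast
  qed
qed

end
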